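(* Let $H$ be a complex separable Hilbert space and let $\mathcal{G}$ be a countable group of unitary operators on $H$. Let $M$ and $K$ be wandering subspaces of $H$ for $\mathcal{G}$. If $\sum_{g \in \mathcal{G}} \oplus^{\perp} g(M) \subseteq \sum_{g \in \mathcal{G}} \oplus^{\perp} g(K)$, then $\dim(M) \le \dim(K)$.
   Context: A closed linear subspace $M$ of $H$ is a wandering subspace for a set $\mathcal{U}$ of unitary operators (containing the identity) if $U(M) \perp V(M)$ for all $U, V \in \mathcal{U}$ with $U \neq V$. For a wandering subspace $M$, $\sum_{g \in \mathcal{G}} \oplus^{\perp} g(M)$ denotes the closed orthogonal direct sum of the mutually orthogonal subspaces $g(M)$, $g \in \mathcal{G}$. *)

theory Defs
  imports "HOL-Analysis.Analysis"
begin

text \<open>The underlying normed space structure (norm, metric, topology) is that of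
  real_normed_vector; the complex scalar multiplication extends the real one and the
  norm is induced by the complex inner product (linear in the second argument,
  conjugate linear in the first).\<close>

class complex_inner = real_normed_vector +
  fixes scaleC :: "complex \<Rightarrow> 'a \<Rightarrow> 'a" (infixr "*\<^sub>C" 75)
    and cinner :: "'a \<Rightarrow> 'a \<Rightarrow> complex"
  assumes scaleC_add_right: "a *\<^sub>C (x + y) = a *\<^sub>C x + a *\<^sub>C y"
    and scaleC_add_left: "(a + b) *\<^sub>C x = a *\<^sub>C x + b *\<^sub>C x"
    and scaleC_scaleC: "a *\<^sub>C (b *\<^sub>C x) = (a * b) *\<^sub>C x"
    and scaleC_one: "1 *\<^sub>C x = x"
    and scaleR_scaleC: "scaleR r x = complex_of_real r *\<^sub>C x"
    and cinner_commute: "cinner x y = cnj (cinner y x)"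
    and cinner_add_left: "cinner (x + y) z = cinner x z + cinner y z"
    and cinner_scaleC_left: "cinner (a *\<^sub>C x) y = cnj a * cinner x y"
    and cinner_self_norm: "cinner x x = complex_of_real ((norm x)\<^sup>2)"

class chilbert_space = complex_inner + complete_space

definition separable_space :: "'a::topological_space itself \<Rightarrow> bool" where
  "separable_space _ \<longleftrightarrow> (\<exists>D::'a set. countable D \<and> closure D = UNIV)"

definition clinear :: "('a::complex_inner \<Rightarrow> 'b::complex_inner) \<Rightarrow> bool" where
  "clinear f \<longleftrightarrow> (\<forall>x y. f (x + y) = f x + f y) \<and> (\<forall>a x. f (a *\<^sub>C x) = a *\<^sub>C f x)"

definition unitary :: "('a::complex_inner \<Rightarrow> 'a) \<Rightarrow> bool" where
  "unitary U \<longleftrightarrow> clinear U \<and> (\<forall>x y. cinner (U x) (U y) = cinner x y) \<and> surj U"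

definition unitary_group :: "('a::complex_inner \<Rightarrow> 'a) set \<Rightarrow> bool" where
  "unitary_group G \<longleftrightarrow> (\<forall>U\<in>G. unitary U) \<and> id \<in> G
     \<and> (\<forall>U\<in>G. \<forall>V\<in>G. U \<circ> V \<in> G) \<and> (\<forall>U\<in>G. inv U \<in> G)"

definition csubspace :: "'a::complex_inner set \<Rightarrow> bool" where
  "csubspace M \<longleftrightarrow> 0 \<in> M \<and> (\<forall>x\<in>M. \<forall>y\<in>M. x + y \<in> M) \<and> (\<forall>a. \<forall>x\<in>M. a *\<^sub>C x \<in> M)"

definition closed_csubspace :: "'a::complex_inner set \<Rightarrow> bool" where
  "closed_csubspace M \<longleftrightarrow> csubspace M \<and> closed M"

definition ccspan :: "'a::complex_inner set \<Rightarrow> 'a set" where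
  "ccspan S = \<Inter>{N. closed_csubspace N \<and> S \<subseteq> N}"

definition orthogonal_sets :: "'a::complex_inner set \<Rightarrow> 'a set \<Rightarrow> bool" where
  "orthogonal_sets A B \<longleftrightarrow> (\<forall>x\<in>A. \<forall>y\<in>B. cinner x y = 0)"

definition wandering_subspace :: "('a::complex_inner \<Rightarrow> 'a) set \<Rightarrow> 'a set \<Rightarrow> bool" where
  "wandering_subspace \<U> M \<longleftrightarrow> closed_csubspace M
     \<and> (\<forall>U\<in>\<U>. \<forall>V\<in>\<U>. U \<noteq> V \<longrightarrow> orthogonal_sets (U ` M) (V ` M))"

text \<open>Closed orthogonal direct sum of the mutually orthogonal subspaces g(M), g in G
  (for wandering M this is the closed span of their union).\<close>
definition orth_sum :: "('a::complex_inner \<Rightarrow> 'a) set \<Rightarrow> 'a set \<Rightarrow> 'a set" where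
  "orth_sum G M = ccspan (\<Union>g\<in>G. g ` M)"

definition orthonormal :: "'a::complex_inner set \<Rightarrow> bool" where
  "orthonormal B \<longleftrightarrow> (\<forall>x\<in>B. cinner x x = 1) \<and> (\<forall>x\<in>B. \<forall>y\<in>B. x \<noteq> y \<longrightarrow> cinner x y = 0)"

text \<open>Orthonormal basis of a closed subspace M (the Hilbert dimension of M is its cardinality).\<close>
definition orthonormal_basis :: "'a::complex_inner set \<Rightarrow> 'a set \<Rightarrow> bool" where
  "orthonormal_basis B M \<longleftrightarrow> B \<subseteq> M \<and> orthonormal B \<and> ccspan B = M"

end

theory Submission
  imports Defs
begin

lemma scaleC_zero_left[simp]: "0 *\<^sub>C x = (0::'a::complex_inner)"
proof -
  have "0 *\<^sub>C x = 0 *\<^sub>C x + 0 *\<^sub>C (x::'a)" using scaleC_add_left[of 0 0 x] by simp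
  then show ?thesis by simp
qed

lemma scaleC_zero_right[simp]: "a *\<^sub>C 0 = (0::'a::complex_inner)"
proof -
  have "a *\<^sub>C 0 = a *\<^sub>C 0 + a *\<^sub>C (0::'a)" using scaleC_add_right[of a 0 0] by simp
  then show ?thesis by simp
qed

lemma scaleC_diff_right: "a *\<^sub>C (x - y) = a *\<^sub>C x - a *\<^sub>C (y::'a::complex_inner)"
  using scaleC_add_right[of a "x - y" y] by (simp add: algebra_simps)

lemma scaleC_sum_right: "a *\<^sub>C sum f A = (\<Sum>i\<in>A. a *\<^sub>C (f i::'a::complex_inner))"
  by (induct A rule: infinite_finite_induct) (simp_all add: scaleC_add_right)

lemma cinner_zero_left[simp]: "cinner 0 (y::'a::complex_inner) = 0"
  using cinner_add_left[of 0 0 y] by simp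

lemma cinner_zero_right[simp]: "cinner (y::'a::complex_inner) 0 = 0"
  using cinner_commute[of y 0] by simp

lemma cinner_diff_left: "cinner (x - y) (z::'a::complex_inner) = cinner x z - cinner y z"
  using cinner_add_left[of "x - y" y z] by (simp add: algebra_simps)

lemma cinner_add_right: "cinner x (y + z) = cinner x y + cinner x (z::'a::complex_inner)"
  by (metis cinner_add_left cinner_commute complex_cnj_add)

lemma cinner_diff_right: "cinner x (y - z) = cinner x y - cinner x (z::'a::complex_inner)"
  by (metis cinner_diff_left cinner_commute complex_cnj_diff)

lemma cinner_scaleC_right: "cinner x (a *\<^sub>C y) = a * cinner x (y::'a::complex_inner)"
  by (metis cinner_scaleC_left cinner_commute complex_cnj_cnj complex_cnj_mult)

lemma cinner_sum_left: "cinner (sum f A) (y::'a::complex_inner) = (\<Sum>i\<in>A. cinner (f i) y)"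
  by (induct A rule: infinite_finite_induct) (simp_all add: cinner_add_left)

lemma cinner_sum_right: "cinner y (sum f A) = (\<Sum>i\<in>A. cinner (y::'a::complex_inner) (f i))"
  by (induct A rule: infinite_finite_induct) (simp_all add: cinner_add_right)

lemma norm_sq_cinner: "(norm x)\<^sup>2 = Re (cinner x (x::'a::complex_inner))"
  by (simp add: cinner_self_norm)

lemma norm_scaleC: "norm (a *\<^sub>C x) = cmod a * norm (x::'a::complex_inner)"
proof -
  have "cinner (a *\<^sub>C x) (a *\<^sub>C x) = (cnj a * a) * cinner x x"
    by (simp add: cinner_scaleC_left cinner_scaleC_right)
  also have "\<dots> = complex_of_real ((cmod a * norm x)\<^sup>2)"
    by (simp add: cinner_self_norm complex_norm_square[symmetric] power_mult_distrib mult.commute)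
  finally have "(norm (a *\<^sub>C x))\<^sup>2 = (cmod a * norm x)\<^sup>2"
    by (simp add: norm_sq_cinner)
  then show ?thesis by (simp add: power2_eq_imp_eq)
qed

lemma cmod_sq_Re: "(cmod z)\<^sup>2 = Re (cnj z * z)"
  by (metis Re_complex_of_real complex_norm_square mult.commute)

lemma expansion:
  fixes v :: "'i \<Rightarrow> 'a::complex_inner"
  assumes fin: "finite I"
    and on: "\<And>i j. i \<in> I \<Longrightarrow> j \<in> I \<Longrightarrow> cinner (v i) (v j) = (if i = j then 1 else 0)"
  shows "(norm (x - (\<Sum>i\<in>I. c i *\<^sub>C v i)))\<^sup>2 =
     (norm x)\<^sup>2 + (\<Sum>i\<in>I. (cmod (c i - cinner (v i) x))\<^sup>2 - (cmod (cinner (v i) x))\<^sup>2)"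
proof -
  define s where "s = (\<Sum>i\<in>I. c i *\<^sub>C v i)"
  define a where "a i = cinner (v i) x" for i
  have sx: "cinner s x = (\<Sum>i\<in>I. cnj (c i) * a i)"
    by (simp add: s_def a_def cinner_sum_left cinner_scaleC_left)
  have xs: "cinner x s = (\<Sum>i\<in>I. c i * cnj (a i))"
    by (simp add: s_def a_def cinner_sum_right cinner_scaleC_right)
       (metis cinner_commute)
  have ss: "cinner s s = (\<Sum>i\<in>I. cnj (c i) * c i)"
  proof -
    have "cinner s s = (\<Sum>i\<in>I. \<Sum>j\<in>I. cnj (c i) * (c j * cinner (v i) (v j)))"
      unfolding s_def cinner_sum_left
      by (simp add: cinner_sum_right cinner_scaleC_left cinner_scaleC_right sum_distrib_left mult.left_commute)
    also have "\<dots> = (\<Sum>i\<in>I. \<Sum>j\<in>I. if i = j then cnj (c i) * c i else 0)"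
      by (intro sum.cong refl) (simp add: on)
    also have "\<dots> = (\<Sum>i\<in>I. cnj (c i) * c i)"
      using fin by (simp add: sum.delta)
    finally show ?thesis .
  qed
  have "cinner (x - s) (x - s) = cinner x x - cinner x s - cinner s x + cinner s s"
    by (simp add: cinner_diff_left cinner_diff_right)
  also have "\<dots> = cinner x x + (\<Sum>i\<in>I. cnj (c i - a i) * (c i - a i) - cnj (a i) * a i)"
    by (simp add: sx xs ss sum_subtractf[symmetric] sum.distrib[symmetric] algebra_simps)
  finally have "Re (cinner (x - s) (x - s)) = Re (cinner x x) + (\<Sum>i\<in>I. Re (cnj (c i - a i) * (c i - a i)) - Re (cnj (a i) * a i))"
    by (simp add: Re_sum)
  then show ?thesis
    by (simp add: norm_sq_cinner cmod_sq_Re s_def a_def)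
qed

lemma bessel:
  fixes v :: "'i \<Rightarrow> 'a::complex_inner"
  assumes fin: "finite I"
    and on: "\<And>i j. i \<in> I \<Longrightarrow> j \<in> I \<Longrightarrow> cinner (v i) (v j) = (if i = j then 1 else 0)"
  shows "(\<Sum>i\<in>I. (cmod (cinner (v i) x))\<^sup>2) \<le> (norm x)\<^sup>2"
proof -
  have "0 \<le> (norm (x - (\<Sum>i\<in>I. cinner (v i) x *\<^sub>C v i)))\<^sup>2" by simp
  also have "\<dots> = (norm x)\<^sup>2 - (\<Sum>i\<in>I. (cmod (cinner (v i) x))\<^sup>2)"
    using expansion[OF fin on, of x "\<lambda>i. cinner (v i) x"] by (simp add: sum_negf)
  finally show ?thesis by simp
qed

lemma approx_bound:
  fixes v :: "'i \<Rightarrow> 'a::complex_inner"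
  assumes fin: "finite I"
    and on: "\<And>i j. i \<in> I \<Longrightarrow> j \<in> I \<Longrightarrow> cinner (v i) (v j) = (if i = j then 1 else 0)"
  shows "(norm x)\<^sup>2 - (\<Sum>i\<in>I. (cmod (cinner (v i) x))\<^sup>2) \<le> (norm (x - (\<Sum>i\<in>I. c i *\<^sub>C v i)))\<^sup>2"
proof -
  have "(\<Sum>i\<in>I. - (cmod (cinner (v i) x))\<^sup>2) \<le> (\<Sum>i\<in>I. (cmod (c i - cinner (v i) x))\<^sup>2 - (cmod (cinner (v i) x))\<^sup>2)"
    by (intro sum_mono) simp
  moreover have "(\<Sum>i\<in>I. - (cmod (cinner (v i) x))\<^sup>2) = - (\<Sum>i\<in>I. (cmod (cinner (v i) x))\<^sup>2)"
    by (rule sum_negf)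
  ultimately show ?thesis
    using expansion[OF fin on, of x c] by linarith
qed

lemma unitary_add: "unitary U \<Longrightarrow> U (x + y) = U x + U y"
  by (simp add: unitary_def clinear_def)
lemma unitary_scaleC: "unitary U \<Longrightarrow> U (a *\<^sub>C x) = a *\<^sub>C U x"
  by (simp add: unitary_def clinear_def)
lemma unitary_cinner: "unitary U \<Longrightarrow> cinner (U x) (U y) = cinner x y"
  by (simp add: unitary_def)
lemma unitary_zero: "unitary U \<Longrightarrow> U 0 = 0"
  using unitary_scaleC[of U 0 0] by simp
lemma unitary_diff: "unitary U \<Longrightarrow> U (x - y) = U x - U y"
  using unitary_add[of U "x - y" y] by (simp add: eq_diff_eq)
lemma unitary_norm: "unitary U \<Longrightarrow> norm (U x) = norm x"
proof -
  assume U: "unitary U"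
  have "(norm (U x))\<^sup>2 = (norm x)\<^sup>2" by (simp add: norm_sq_cinner unitary_cinner[OF U])
  then show ?thesis by (simp add: power2_eq_imp_eq)
qed
lemma unitary_surj: "unitary U \<Longrightarrow> U (inv U y) = y"
  by (simp add: unitary_def surj_f_inv_f)
lemma unitary_inj: "unitary U \<Longrightarrow> inj U"
proof (rule injI)
  fix x y assume U: "unitary U" and e: "U x = U y"
  have "norm (x - y) = norm (U x - U y)" by (simp add: unitary_diff[OF U, symmetric] unitary_norm[OF U])
  then show "x = y" using e by simp
qed
lemma unitary_bij: "unitary U \<Longrightarrow> bij U"
  unfolding bij_def using unitary_inj by (simp add: unitary_def)
lemma unitary_inv_cinner: "unitary U \<Longrightarrow> cinner (inv U x) (inv U y) = cinner x y"
  using unitary_cinner[of U "inv U x" "inv U y"] by (simp add: unitary_surj)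
lemma unitary_adj: "unitary U \<Longrightarrow> cinner (U x) y = cinner x (inv U y)"
  using unitary_cinner[of U x "inv U y"] by (simp add: unitary_surj)

lemma closed_by_approach:
  fixes S :: "'a::metric_space set"
  assumes "\<And>x. (\<forall>e>0. \<exists>y\<in>S. dist y x < e) \<Longrightarrow> x \<in> S"
  shows "closed S"
proof -
  have "closure S \<subseteq> S" using assms closure_approachable by blast
  then show ?thesis using closure_subset_eq by blast
qed

definition approx_set :: "('i \<Rightarrow> 'a::complex_inner) \<Rightarrow> 'i set \<Rightarrow> 'a set" where
  "approx_set w I = {x. \<forall>\<epsilon>>0. \<exists>T c. finite T \<and> T \<subseteq> I \<and> norm (x - (\<Sum>t\<in>T. c t *\<^sub>C w t)) < \<epsilon>}"

lemma approx_set_closed_csubspace: "closed_csubspace (approx_set w I)"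
  unfolding closed_csubspace_def csubspace_def
proof (intro conjI ballI allI)
  show "0 \<in> approx_set w I"
    unfolding approx_set_def by (auto intro!: exI[of _ "{}"])
next
  fix x y assume x: "x \<in> approx_set w I" and y: "y \<in> approx_set w I"
  show "x + y \<in> approx_set w I"
    unfolding approx_set_def
  proof (intro CollectI allI impI)
    fix e :: real assume e: "e > 0"
    then have "e/2 > 0" by simp
    obtain T1 c1 where T1: "finite T1" "T1 \<subseteq> I" "norm (x - (\<Sum>t\<in>T1. c1 t *\<^sub>C w t)) < e/2"
      using x \<open>e/2 > 0\<close> unfolding approx_set_def by blast
    obtain T2 c2 where T2: "finite T2" "T2 \<subseteq> I" "norm (y - (\<Sum>t\<in>T2. c2 t *\<^sub>C w t)) < e/2"
      using y \<open>e/2 > 0\<close> unfolding approx_set_def by blast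
    define c where "c t = (if t \<in> T1 then c1 t else 0) + (if t \<in> T2 then c2 t else 0)" for t
    have eq1: "(\<Sum>t\<in>T1 \<union> T2. (if t \<in> T1 then c1 t else 0) *\<^sub>C w t) = (\<Sum>t\<in>T1. c1 t *\<^sub>C w t)"
    proof -
      have "(\<Sum>t\<in>T1 \<union> T2. (if t \<in> T1 then c1 t else 0) *\<^sub>C w t) = (\<Sum>t\<in>T1 \<union> T2. if t \<in> T1 then c1 t *\<^sub>C w t else 0)"
        by (intro sum.cong) auto
      also have "\<dots> = (\<Sum>t\<in>(T1 \<union> T2) \<inter> T1. c1 t *\<^sub>C w t)"
        using T1 T2 by (intro sum.inter_restrict[symmetric]) simp
      finally show ?thesis by (simp add: Int_absorb1)
    qed
    have eq2: "(\<Sum>t\<in>T1 \<union> T2. (if t \<in> T2 then c2 t else 0) *\<^sub>C w t) = (\<Sum>t\<in>T2. c2 t *\<^sub>C w t)"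
    proof -
      have "(\<Sum>t\<in>T1 \<union> T2. (if t \<in> T2 then c2 t else 0) *\<^sub>C w t) = (\<Sum>t\<in>T1 \<union> T2. if t \<in> T2 then c2 t *\<^sub>C w t else 0)"
        by (intro sum.cong) auto
      also have "\<dots> = (\<Sum>t\<in>(T1 \<union> T2) \<inter> T2. c2 t *\<^sub>C w t)"
        using T1 T2 by (intro sum.inter_restrict[symmetric]) simp
      finally show ?thesis by (simp add: Int_absorb2)
    qed
    have "(\<Sum>t\<in>T1 \<union> T2. c t *\<^sub>C w t) = (\<Sum>t\<in>T1. c1 t *\<^sub>C w t) + (\<Sum>t\<in>T2. c2 t *\<^sub>C w t)"
      unfolding c_def scaleC_add_left sum.distrib eq1 eq2 ..
    then have "x + y - (\<Sum>t\<in>T1 \<union> T2. c t *\<^sub>C w t) = (x - (\<Sum>t\<in>T1. c1 t *\<^sub>C w t)) + (y - (\<Sum>t\<in>T2. c2 t *\<^sub>C w t))"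
      by (simp add: algebra_simps)
    then have "norm (x + y - (\<Sum>t\<in>T1 \<union> T2. c t *\<^sub>C w t)) \<le> norm (x - (\<Sum>t\<in>T1. c1 t *\<^sub>C w t)) + norm (y - (\<Sum>t\<in>T2. c2 t *\<^sub>C w t))"
      by (simp only: norm_triangle_ineq)
    then show "\<exists>T c. finite T \<and> T \<subseteq> I \<and> norm (x + y - (\<Sum>t\<in>T. c t *\<^sub>C w t)) < e"
      using T1 T2 by (intro exI[of _ "T1 \<union> T2"] exI[of _ c]) simp
  qed
next
  fix a x assume x: "x \<in> approx_set w I"
  show "a *\<^sub>C x \<in> approx_set w I"
    unfolding approx_set_def
  proof (intro CollectI allI impI)
    fix e :: real assume e: "e > 0"
    have ap: "cmod a + 1 > 0" using norm_ge_zero[of a] by linarith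
    have "e / (cmod a + 1) > 0" using e ap by (rule divide_pos_pos)
    then obtain T c where T: "finite T" "T \<subseteq> I" "norm (x - (\<Sum>t\<in>T. c t *\<^sub>C w t)) < e / (cmod a + 1)"
      using x unfolding approx_set_def by blast
    have "a *\<^sub>C x - (\<Sum>t\<in>T. (a * c t) *\<^sub>C w t) = a *\<^sub>C (x - (\<Sum>t\<in>T. c t *\<^sub>C w t))"
      by (simp only: scaleC_diff_right scaleC_sum_right scaleC_scaleC)
    then have "norm (a *\<^sub>C x - (\<Sum>t\<in>T. (a * c t) *\<^sub>C w t)) = cmod a * norm (x - (\<Sum>t\<in>T. c t *\<^sub>C w t))"
      by (simp only: norm_scaleC)
    also have "\<dots> \<le> (cmod a + 1) * norm (x - (\<Sum>t\<in>T. c t *\<^sub>C w t))"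
      by (intro mult_right_mono) simp_all
    also have "\<dots> < (cmod a + 1) * (e / (cmod a + 1))"
      by (rule mult_strict_left_mono[OF T(3) ap])
    also have "\<dots> = e" using ap by (simp add: field_simps)
    finally show "\<exists>T c. finite T \<and> T \<subseteq> I \<and> norm (a *\<^sub>C x - (\<Sum>t\<in>T. c t *\<^sub>C w t)) < e"
      using T by (intro exI[of _ T] exI[of _ "\<lambda>t. a * c t"]) simp
  qed
next
  show "closed (approx_set w I)"
  proof (rule closed_by_approach)
    fix x assume h: "\<forall>e>0. \<exists>y\<in>approx_set w I. dist y x < e"
    show "x \<in> approx_set w I"
      unfolding approx_set_def
    proof (intro CollectI allI impI)
      fix e :: real assume e: "e > 0"
      have e2: "e/2 > 0" using e by simp
      obtain y where y: "y \<in> approx_set w I" "dist y x < e/2" using h e2 by blast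
      obtain T c where T: "finite T" "T \<subseteq> I" "norm (y - (\<Sum>t\<in>T. c t *\<^sub>C w t)) < e/2"
        using y(1) e2 unfolding approx_set_def by blast
      have "norm (x - (\<Sum>t\<in>T. c t *\<^sub>C w t)) \<le> norm (x - y) + norm (y - (\<Sum>t\<in>T. c t *\<^sub>C w t))"
        using norm_triangle_ineq[of "x - y" "y - (\<Sum>t\<in>T. c t *\<^sub>C w t)"] by simp
      also have "\<dots> < e" using y(2) T(3) by (simp add: dist_norm norm_minus_commute)
      finally show "\<exists>T c. finite T \<and> T \<subseteq> I \<and> norm (x - (\<Sum>t\<in>T. c t *\<^sub>C w t)) < e"
        using T by blast
    qed
  qed
qed

lemma ccspan_least: "closed_csubspace N \<Longrightarrow> S \<subseteq> N \<Longrightarrow> ccspan S \<subseteq> N"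
  unfolding ccspan_def by blast

lemma ccspan_sup: "S \<subseteq> ccspan S"
  unfolding ccspan_def by blast

lemma unitary_vimage_closed_csubspace:
  assumes U: "unitary U" and N: "closed_csubspace N"
  shows "closed_csubspace {x. U x \<in> N}"
  unfolding closed_csubspace_def csubspace_def
proof (intro conjI ballI allI)
  show "0 \<in> {x. U x \<in> N}" using N U by (simp add: closed_csubspace_def csubspace_def unitary_zero)
  show "x + y \<in> {x. U x \<in> N}" if "x \<in> {x. U x \<in> N}" "y \<in> {x. U x \<in> N}" for x y
    using that N U by (simp add: closed_csubspace_def csubspace_def unitary_add)
  show "a *\<^sub>C x \<in> {x. U x \<in> N}" if "x \<in> {x. U x \<in> N}" for a x
    using that N U by (simp add: closed_csubspace_def csubspace_def unitary_scaleC)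
  show "closed {x. U x \<in> N}"
  proof (rule closed_by_approach)
    fix x assume h: "\<forall>e>0. \<exists>y\<in>{x. U x \<in> N}. dist y x < e"
    have "\<forall>e>0. \<exists>y\<in>N. dist y (U x) < e"
    proof (intro allI impI)
      fix e :: real assume "e > 0"
      then obtain y where "U y \<in> N" "dist y x < e" using h by auto
      moreover have "dist (U y) (U x) = dist y x"
        using U by (simp add: dist_norm unitary_diff[symmetric] unitary_norm)
      ultimately show "\<exists>y\<in>N. dist y (U x) < e" by (intro bexI[of _ "U y"]) auto
    qed
    then show "x \<in> {x. U x \<in> N}"
    proof -
      have "U x \<in> closure N" using closure_approachable \<open>\<forall>e>0. \<exists>y\<in>N. dist y (U x) < e\<close> by blast
      moreover have "closed N" using N unfolding closed_csubspace_def by simp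
      ultimately show ?thesis by (simp add: closure_closed)
    qed
  qed
qed

lemma orthonormal_countable:
  fixes B :: "'a::complex_inner set"
  assumes sep: "separable_space TYPE('a)" and on: "orthonormal B"
  shows "countable B"
proof -
  obtain D :: "'a set" where D: "countable D" "closure D = UNIV"
    using sep unfolding separable_space_def by blast
  have "\<forall>e\<in>B. \<exists>d\<in>D. dist d e < 1/2"
  proof
    fix e assume "e \<in> B"
    have "e \<in> closure D" using D by simp
    then have "\<forall>\<epsilon>>0. \<exists>y\<in>D. dist y e < \<epsilon>" unfolding closure_approachable .
    moreover have "(1/2::real) > 0" by simp
    ultimately show "\<exists>d\<in>D. dist d e < 1/2" by blast
  qed
  then obtain h where h: "\<forall>e\<in>B. h e \<in> D \<and> dist (h e) e < 1/2"
    using bchoice[of B "\<lambda>e d. d \<in> D \<and> dist d e < 1/2"] by blast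
  have inj: "inj_on h B"
  proof (rule inj_onI)
    fix e e' assume e: "e \<in> B" "e' \<in> B" "h e = h e'"
    show "e = e'"
    proof (rule ccontr)
      assume ne: "e \<noteq> e'"
      have "cinner e e = 1" "cinner e' e' = 1" "cinner e e' = 0" "cinner e' e = 0"
        using on e ne unfolding orthonormal_def by auto
      then have "cinner (e - e') (e - e') = 2" by (simp add: cinner_diff_left cinner_diff_right)
      then have sq: "(norm (e - e'))\<^sup>2 = 2" by (simp add: norm_sq_cinner)
      have "e - e' = (h e' - e') - (h e - e)" using e(3) by simp
      then have "norm (e - e') \<le> norm (h e' - e') + norm (h e - e)"
        by (simp only: norm_triangle_ineq4)
      also have "\<dots> < 1"
      proof -
        have "dist (h e') e' < 1/2" "dist (h e) e < 1/2" using h e by auto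
        then show ?thesis by (simp add: dist_norm)
      qed
      finally have "norm (e - e') < 1" .
      then have "(norm (e - e'))\<^sup>2 < 1"
        using power_strict_mono[of "norm (e - e')" 1 2] by simp
      then show False using sq by simp
    qed
  qed
  have "h ` B \<subseteq> D" using h by auto
  then have "countable (h ` B)" using D(1) countable_subset by blast
  then show ?thesis using inj countable_image_inj_on by blast
qed

theorem lemma2p1:
  fixes G :: "('a::chilbert_space \<Rightarrow> 'a) set"
    and M K :: "'a set"
  assumes "separable_space TYPE('a)"
    and "unitary_group G"
    and "countable G"
    and "wandering_subspace G M"
    and "wandering_subspace G K"
    and "orth_sum G M \<subseteq> orth_sum G K"
  shows "\<forall>BM BK. orthonormal_basis BM M \<longrightarrow> orthonormal_basis BK K
           \<longrightarrow> (\<exists>f. inj_on f BM \<and> f ` BM \<subseteq> BK)"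
proof (intro allI impI)
  fix BM BK assume BM: "orthonormal_basis BM M" and BK: "orthonormal_basis BK K"
  have GU: "\<And>g. g \<in> G \<Longrightarrow> unitary g" and idG: "id \<in> G" and invG: "\<And>g. g \<in> G \<Longrightarrow> inv g \<in> G"
    using assms(2) unfolding unitary_group_def by auto
  have BMM: "BM \<subseteq> M" "orthonormal BM" and BKK: "BK \<subseteq> K" "orthonormal BK" "ccspan BK = K"
    using BM BK unfolding orthonormal_basis_def by auto
  have wM: "\<And>U V x y. U \<in> G \<Longrightarrow> V \<in> G \<Longrightarrow> U \<noteq> V \<Longrightarrow> x \<in> M \<Longrightarrow> y \<in> M \<Longrightarrow> cinner (U x) (V y) = 0"
    using assms(4) unfolding wandering_subspace_def orthogonal_sets_def by blast
  have wK: "\<And>U V x y. U \<in> G \<Longrightarrow> V \<in> G \<Longrightarrow> U \<noteq> V \<Longrightarrow> x \<in> K \<Longrightarrow> y \<in> K \<Longrightarrow> cinner (U x) (V y) = 0"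
    using assms(5) unfolding wandering_subspace_def orthogonal_sets_def by blast
  have BMon: "\<And>e e'. e \<in> BM \<Longrightarrow> e' \<in> BM \<Longrightarrow> cinner e e' = (if e = e' then 1 else 0)"
    using BMM(2) unfolding orthonormal_def by auto
  have BKon: "\<And>e e'. e \<in> BK \<Longrightarrow> e' \<in> BK \<Longrightarrow> cinner e e' = (if e = e' then 1 else 0)"
    using BKK(2) unfolding orthonormal_def by auto
  show "\<exists>f. inj_on f BM \<and> f ` BM \<subseteq> BK"
  proof (cases "finite BK")
    case False
    have cBM: "countable BM" using orthonormal_countable[OF assms(1) BMM(2)] .
    obtain f :: "nat \<Rightarrow> 'a" where f: "inj f" "range f \<subseteq> BK"
      using infinite_countable_subset[OF False] by blast
    have "inj_on (f \<circ> to_nat_on BM) BM"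
      by (rule comp_inj_on[OF inj_on_to_nat_on[OF cBM]]) (rule inj_on_subset[OF f(1)], simp)
    moreover have "(f \<circ> to_nat_on BM) ` BM \<subseteq> BK" using f(2) by auto
    ultimately show ?thesis by blast
  next
    case True
    define w where "w = (\<lambda>p::('a\<Rightarrow>'a)\<times>'a. fst p (snd p))"
    define W where "W = approx_set w (G \<times> BK)"
    have Wcs: "closed_csubspace W" unfolding W_def by (rule approx_set_closed_csubspace)
    have wW: "w p \<in> W" if p: "p \<in> G \<times> BK" for p
      unfolding W_def approx_set_def
    proof (intro CollectI allI impI)
      fix e :: real assume "e > 0"
      then show "\<exists>T c. finite T \<and> T \<subseteq> G \<times> BK \<and> norm (w p - (\<Sum>t\<in>T. c t *\<^sub>C w t)) < e"
        using p by (intro exI[of _ "{p}"] exI[of _ "\<lambda>_. 1"]) (simp add: scaleC_one)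
    qed
    have gK: "g ` K \<subseteq> W" if g: "g \<in> G" for g
    proof -
      have "closed_csubspace {x. g x \<in> W}"
        using unitary_vimage_closed_csubspace[OF GU[OF g] Wcs] .
      moreover have "BK \<subseteq> {x. g x \<in> W}"
      proof
        fix f assume "f \<in> BK"
        then have "w (g, f) \<in> W" using g by (intro wW) simp
        then show "f \<in> {x. g x \<in> W}" by (simp add: w_def)
      qed
      ultimately have "ccspan BK \<subseteq> {x. g x \<in> W}" by (rule ccspan_least)
      then show "g ` K \<subseteq> W" using BKK(3) by auto
    qed
    have "orth_sum G K \<subseteq> W" unfolding orth_sum_def using gK by (intro ccspan_least[OF Wcs]) auto
    moreover have "M \<subseteq> orth_sum G M" unfolding orth_sum_def
    proof -
      have "M = id ` M" by simp
      also have "\<dots> \<subseteq> (\<Union>g\<in>G. g ` M)" using idG by (rule UN_upper)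
      finally have "M \<subseteq> (\<Union>g\<in>G. g ` M)" .
      then show "M \<subseteq> ccspan (\<Union>g\<in>G. g ` M)" using ccspan_sup by blast
    qed
    ultimately have BMW: "BM \<subseteq> W" using assms(6) BMM(1) by blast
    have onw: "cinner (w p) (w q) = (if p = q then 1 else 0)" if p: "p \<in> G \<times> BK" and q: "q \<in> G \<times> BK" for p q
    proof -
      obtain g f where pg: "p = (g, f)" by (cases p)
      obtain g' f' where qg: "q = (g', f')" by (cases q)
      show ?thesis
      proof (cases "g = g'")
        case True
        then have "cinner (w p) (w q) = cinner f f'" using p GU by (simp add: w_def pg qg unitary_cinner)
        then show ?thesis using BKon[of f f'] p q True unfolding pg qg by auto
      next
        case False
        then show ?thesis using wK[of g g' f f'] p q BKK(1) by (auto simp: w_def pg qg)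
      qed
    qed
    have key: "card S \<le> card BK" if S: "finite S" "S \<subseteq> BM" for S
    proof -
      have bound: "real (card S) \<le> real (card BK) + real (card S) * \<delta>\<^sup>2" if d: "\<delta> > 0" for \<delta> :: real
      proof -
        have "\<forall>e\<in>S. \<exists>T c. finite T \<and> T \<subseteq> G \<times> BK \<and> norm (e - (\<Sum>t\<in>T. c t *\<^sub>C w t)) < \<delta>"
        proof
          fix e assume "e \<in> S"
          then have "e \<in> W" using S BMW by auto
          then show "\<exists>T c. finite T \<and> T \<subseteq> G \<times> BK \<and> norm (e - (\<Sum>t\<in>T. c t *\<^sub>C w t)) < \<delta>"
            using d unfolding W_def approx_set_def by blast
        qed
        from bchoice[OF this] obtain Tf where "\<forall>e\<in>S. \<exists>c. finite (Tf e) \<and> Tf e \<subseteq> G \<times> BK \<and> norm (e - (\<Sum>t\<in>Tf e. c t *\<^sub>C w t)) < \<delta>"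
          by (elim exE) (rule that)
        from bchoice[OF this] obtain cf where Tf: "\<forall>e\<in>S. finite (Tf e) \<and> Tf e \<subseteq> G \<times> BK \<and> norm (e - (\<Sum>t\<in>Tf e. cf e t *\<^sub>C w t)) < \<delta>"
          by (elim exE) (rule that)
        define T0 where "T0 = (\<Union>e\<in>S. Tf e)"
        have T0: "finite T0" "T0 \<subseteq> G \<times> BK" using Tf S unfolding T0_def by auto
        have onT0: "cinner (w p) (w q) = (if p = q then 1 else 0)" if "p \<in> T0" "q \<in> T0" for p q
        proof -
          have "p \<in> G \<times> BK" "q \<in> G \<times> BK" using that T0(2) by auto
          then show ?thesis by (rule onw)
        qed
        define a where "a t e = (cmod (cinner (w t) e))\<^sup>2" for t e
        have each: "1 \<le> (\<Sum>t\<in>T0. a t e) + \<delta>\<^sup>2" if e: "e \<in> S" for e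
        proof -
          define c where "c t = (if t \<in> Tf e then cf e t else 0)" for t
          have sub: "Tf e \<subseteq> T0" using e unfolding T0_def by auto
          have "(\<Sum>t\<in>T0. c t *\<^sub>C w t) = (\<Sum>t\<in>Tf e. cf e t *\<^sub>C w t)"
          proof -
            have "(\<Sum>t\<in>T0. c t *\<^sub>C w t) = (\<Sum>t\<in>T0. if t \<in> Tf e then cf e t *\<^sub>C w t else 0)"
              by (intro sum.cong) (auto simp: c_def)
            also have "\<dots> = (\<Sum>t\<in>T0 \<inter> Tf e. cf e t *\<^sub>C w t)"
              using T0 by (intro sum.inter_restrict[symmetric]) simp
            finally show ?thesis using sub by (simp add: Int_absorb1)
          qed
          then have "(norm e)\<^sup>2 - (\<Sum>t\<in>T0. a t e) \<le> (norm (e - (\<Sum>t\<in>Tf e. cf e t *\<^sub>C w t)))\<^sup>2"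
            using approx_bound[OF T0(1) onT0, of e c] unfolding a_def by simp
          also have "\<dots> < \<delta>\<^sup>2"
            using Tf e power_strict_mono[of "norm (e - (\<Sum>t\<in>Tf e. cf e t *\<^sub>C w t))" \<delta> 2] by simp
          finally have "(norm e)\<^sup>2 - (\<Sum>t\<in>T0. a t e) < \<delta>\<^sup>2" .
          moreover have "(norm e)\<^sup>2 = 1"
            using BMon[of e e] e S by (simp add: norm_sq_cinner subsetD)
          ultimately show ?thesis by simp
        qed
        have perf: "(\<Sum>t\<in>{t \<in> T0. snd t = f}. \<Sum>e\<in>S. a t e) \<le> 1" if f: "f \<in> BK" for f
        proof -
          define Tg where "Tg = {t \<in> T0. snd t = f}"
          define v where "v = (\<lambda>q::(('a\<Rightarrow>'a)\<times>'a)\<times>'a. inv (fst (fst q)) (snd q))"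
          have fin: "finite (Tg \<times> S)" using T0(1) S(1) unfolding Tg_def by simp
          have onv: "cinner (v p) (v q) = (if p = q then 1 else 0)" if p: "p \<in> Tg \<times> S" and q: "q \<in> Tg \<times> S" for p q
          proof -
            obtain g e where pg: "p = ((g, f), e)" "g \<in> G" "e \<in> S"
              using p T0(2) unfolding Tg_def by force
            obtain g' e' where qg: "q = ((g', f), e')" "g' \<in> G" "e' \<in> S"
              using q T0(2) unfolding Tg_def by force
            show ?thesis
            proof (cases "g = g'")
              case True
              then have "cinner (v p) (v q) = cinner e e'"
                using pg qg GU by (simp add: v_def unitary_inv_cinner)
              moreover have "e \<in> BM" "e' \<in> BM" using S pg qg by auto
              ultimately show ?thesis using BMon[of e e'] pg qg True by auto
            next
              case False
              have "inv g \<noteq> inv g'"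
                using False inv_inv_eq unitary_bij GU pg(2) qg(2) by metis
              then have "cinner (v p) (v q) = 0"
                using wM[of "inv g" "inv g'" e e'] invG pg qg S BMM(1) by (auto simp: v_def)
              then show ?thesis using False pg qg by auto
            qed
          qed
          have "(\<Sum>t\<in>Tg. \<Sum>e\<in>S. a t e) = (\<Sum>q\<in>Tg \<times> S. (cmod (cinner (v q) f))\<^sup>2)"
          proof -
            have "(\<Sum>t\<in>Tg. \<Sum>e\<in>S. a t e) = (\<Sum>t\<in>Tg. \<Sum>e\<in>S. (cmod (cinner (v (t, e)) f))\<^sup>2)"
            proof (intro sum.cong refl)
              fix t e assume t: "t \<in> Tg" and "e \<in> S"
              then obtain g where tg: "t = (g, f)" "g \<in> G" using T0(2) unfolding Tg_def by force
              have "cinner (w t) e = cinner f (inv g e)"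
                using GU[OF tg(2)] by (simp add: w_def tg unitary_adj)
              also have "\<dots> = cnj (cinner (v (t, e)) f)"
                by (simp add: v_def tg cinner_commute[of f])
              finally show "a t e = (cmod (cinner (v (t, e)) f))\<^sup>2"
                by (simp add: a_def)
            qed
            also have "\<dots> = (\<Sum>q\<in>Tg \<times> S. (cmod (cinner (v q) f))\<^sup>2)"
              by (simp add: sum.cartesian_product)
            finally show ?thesis .
          qed
          also have "\<dots> \<le> (norm f)\<^sup>2" by (rule bessel[OF fin onv])
          also have "\<dots> = 1" using BKon[of f f] f by (simp add: norm_sq_cinner)
          finally show ?thesis unfolding Tg_def .
        qed
        have "real (card S) = (\<Sum>e\<in>S. 1)" by simp
        also have "\<dots> \<le> (\<Sum>e\<in>S. (\<Sum>t\<in>T0. a t e) + \<delta>\<^sup>2)" using each by (intro sum_mono) auto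
        also have "\<dots> = (\<Sum>t\<in>T0. \<Sum>e\<in>S. a t e) + real (card S) * \<delta>\<^sup>2"
          by (simp add: sum.distrib sum.swap[of _ T0 S])
        also have "(\<Sum>t\<in>T0. \<Sum>e\<in>S. a t e) = (\<Sum>f\<in>BK. \<Sum>t\<in>{t \<in> T0. snd t = f}. \<Sum>e\<in>S. a t e)"
        proof -
          have sndT: "snd ` T0 \<subseteq> BK" using T0(2) by auto
          show ?thesis by (rule sum.group[OF T0(1) True sndT, symmetric])
        qed
        also have "\<dots> \<le> (\<Sum>f\<in>BK. 1)" using perf by (intro sum_mono) auto
        finally show ?thesis by simp
      qed
      define \<delta> where "\<delta> = 1 / (real (card S) + 1)"
      have dpos: "\<delta> > 0" unfolding \<delta>_def by simp
      have "real (card S) * \<delta>\<^sup>2 < 1"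
      proof -
        have "real (card S) * \<delta>\<^sup>2 = real (card S) / (real (card S) + 1)\<^sup>2"
          by (simp add: \<delta>_def power_divide)
        also have "\<dots> < 1"
        proof -
          have "0 \<le> real (card S) * real (card S)" by simp
          moreover have "(real (card S) + 1)\<^sup>2 = real (card S) * real (card S) + 2 * real (card S) + 1"
            by (simp add: power2_eq_square algebra_simps)
          ultimately have "real (card S) < (real (card S) + 1)\<^sup>2" by linarith
          moreover have "(real (card S) + 1)\<^sup>2 > 0" by (intro zero_less_power) simp
          ultimately show ?thesis by (simp add: pos_divide_less_eq)
        qed
        finally show ?thesis .
      qed
      then have "real (card S) < real (card BK) + 1" using bound[OF dpos] by linarith
      then show ?thesis by linarith
    qed
    have finBM: "finite BM"
    proof (rule ccontr)
      assume "infinite BM"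
      then obtain S where "finite S" "card S = card BK + 1" "S \<subseteq> BM"
        using infinite_arbitrarily_large by blast
      then show False using key by fastforce
    qed
    obtain f where "f ` BM \<subseteq> BK" "inj_on f BM"
      using card_le_inj[OF finBM True key[OF finBM order_refl]] by blast
    then show ?thesis by blast
  qed
qed

end
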